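(* If the genus function $g$ satisfies $g(n)\gg n/\log n$, then $\left(|\mathrm{Hered}(\mathcal F^g)_n|/n!\right)^{1/n}\to\infty$ as $n\to\infty$.
   Context: All graphs are finite and simple; $\mathcal B_n$ is the set of graphs in a class $\mathcal B$ on vertex set $[n]$. A genus function is $g:\mathbb N\to\mathbb N_0$. $\mathcal F^g$ is the class of graphs $G$ such that, if $G$ has $n$ vertices, every cellular embedding of $G$ has Euler genus at most $g(n)$; equivalently the cycle rank $e(G)-v(G)+\kappa(G)$ is at most $g(n)$ ($\kappa(G)$ = number of components). $\mathrm{Hered}(\mathcal B)$ is the class of graphs $G$ with $G[W]\in\mathcal B$ for every nonempty $W\subseteq V(G)$ (so for $G[W]$ the relevant bound is $g(|W|)$). $x\ll y$ means $x/y\to0$. *)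

theory Defs
  imports Complex_Main "HOL-Library.Landau_Symbols"
begin

text \<open>A finite simple graph on vertex set V is represented by its edge set E,
  a set of 2-element subsets of V.\<close>

definition edges_on :: "nat set \<Rightarrow> nat set set" where
  "edges_on V = {e. e \<subseteq> V \<and> card e = 2}"

definition graphs_on :: "nat set \<Rightarrow> nat set set set" where
  "graphs_on V = Pow (edges_on V)"

definition conn_rel :: "nat set \<Rightarrow> nat set set \<Rightarrow> (nat \<times> nat) set" where
  "conn_rel V E = ({(u, v). {u, v} \<in> E}\<^sup>* ) \<inter> (V \<times> V)"

definition num_components :: "nat set \<Rightarrow> nat set set \<Rightarrow> nat" where
  "num_components V E = card (V // conn_rel V E)"

definition cycle_rank :: "nat set \<Rightarrow> nat set set \<Rightarrow> int" where
  "cycle_rank V E = int (card E) - int (card V) + int (num_components V E)"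

definition induced_edges :: "nat set set \<Rightarrow> nat set \<Rightarrow> nat set set" where
  "induced_edges E W = {e \<in> E. e \<subseteq> W}"

text \<open>The n-vertex members of Hered(F^g): graphs on [n] every nonempty induced
  subgraph G[W] of which has cycle rank at most g(|W|).\<close>
definition hered_Fg :: "(nat \<Rightarrow> nat) \<Rightarrow> nat \<Rightarrow> nat set set set" where
  "hered_Fg g n = {E \<in> graphs_on {1..n}.
     \<forall>W. W \<subseteq> {1..n} \<and> W \<noteq> {} \<longrightarrow> cycle_rank W (induced_edges E W) \<le> int (g (card W))}"

end

theory Submission
  imports Defs "HOL-Combinatorics.Permutations" "HOL-Library.FuncSet" "HOL-Real_Asymp.Real_Asymp"
begin

lemma conn_rel_equiv:
  "equiv V (conn_rel V F)"
proof -
  let ?A = "{(u, v). {u, v} \<in> F}"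
  have symA: "sym ?A" by (auto simp: sym_def insert_commute)
  have "sym (?A\<^sup>*)" using symA by (simp add: sym_rtrancl)
  then show ?thesis
    unfolding equiv_def conn_rel_def refl_on_def sym_def trans_def
    by (auto intro: rtrancl_trans)
qed

lemma cycle_rank_empty: "\<forall>e\<in>E. card e = 2 \<Longrightarrow> cycle_rank {} (induced_edges E {}) = 0"
  by (auto simp: cycle_rank_def num_components_def induced_edges_def)

lemma induced_edges_finite:
  "finite W \<Longrightarrow> finite (induced_edges E W)"
  by (rule finite_subset[of _ "Pow W"]) (auto simp: induced_edges_def)

lemma num_components_remove:
  assumes fin: "finite W" and xW: "x \<in> W"
    and E2: "\<forall>e\<in>E. card e = 2"
  shows "int (num_components W (induced_edges E W))
     \<le> int (num_components (W - {x}) (induced_edges E (W - {x})))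
        + (if {e \<in> induced_edges E W. x \<in> e} = {} then 1 else 0)"
proof -
  define W' where "W' = W - {x}"
  define R where "R = conn_rel W (induced_edges E W)"
  define R' where "R' = conn_rel W' (induced_edges E W')"
  have eqR: "equiv W R" unfolding R_def by (rule conn_rel_equiv)
  have eqR': "equiv W' R'" unfolding R'_def by (rule conn_rel_equiv)
  have sub: "R' \<subseteq> R"
  proof -
    have "{(u, v). {u, v} \<in> induced_edges E W'} \<subseteq> {(u, v). {u, v} \<in> induced_edges E W}"
      by (auto simp: induced_edges_def W'_def)
    then have "{(u, v). {u, v} \<in> induced_edges E W'}\<^sup>* \<subseteq> {(u, v). {u, v} \<in> induced_edges E W}\<^sup>*"
      by (rule rtrancl_mono)
    then show ?thesis unfolding R_def R'_def conn_rel_def W'_def by auto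
  qed
  have key: "R `` {w} = R `` (R' `` {w})" if "w \<in> W'" for w
  proof
    show "R `` {w} \<subseteq> R `` (R' `` {w})"
      using that eqR' by (auto simp: equiv_def refl_on_def)
    show "R `` (R' `` {w}) \<subseteq> R `` {w}"
      using sub eqR by (auto simp: equiv_def trans_def)
  qed
  have fin': "finite (W' // R')" using fin equiv_type[OF eqR'] by (intro finite_quotient) (auto simp: W'_def)
  have c1: "W // R \<subseteq> (\<lambda>c. R `` c) ` (W' // R') \<union> {R `` {x}}"
  proof
    fix X assume "X \<in> W // R"
    then obtain w where w: "w \<in> W" "X = R `` {w}" by (auto simp: quotient_def)
    show "X \<in> (\<lambda>c. R `` c) ` (W' // R') \<union> {R `` {x}}"
    proof (cases "w = x")
      case True then show ?thesis using w by auto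
    next
      case False
      then have "w \<in> W'" using w by (auto simp: W'_def)
      then have "R' `` {w} \<in> W' // R'" by (rule quotientI)
      then have "R `` (R' `` {w}) \<in> (\<lambda>c. R `` c) ` (W' // R')" by (rule imageI)
      moreover have "X = R `` (R' `` {w})" using w(2) key[OF \<open>w \<in> W'\<close>] by (rule trans)
      ultimately show ?thesis by blast
    qed
  qed
  show ?thesis
  proof (cases "{e \<in> induced_edges E W. x \<in> e} = {}")
    case True
    have "card (W // R) \<le> card ((\<lambda>c. R `` c) ` (W' // R') \<union> {R `` {x}})"
      by (rule card_mono) (use c1 fin' in auto)
    also have "\<dots> \<le> card ((\<lambda>c. R `` c) ` (W' // R')) + 1"
      using card_insert_if[OF finite_imageI[OF fin', of "\<lambda>c. R `` c"], of "R `` {x}"] by simp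
    also have "\<dots> \<le> card (W' // R') + 1" using card_image_le[OF fin'] by simp
    finally show ?thesis using True
      by (simp add: num_components_def R_def R'_def W'_def)
  next
    case False
    then obtain e where e: "e \<in> E" "e \<subseteq> W" "x \<in> e" by (auto simp: induced_edges_def)
    then have "card e = 2" using E2 by auto
    then obtain u w where uw: "e = {u, w}" "u \<noteq> w" by (auto simp: card_2_iff)
    obtain y where y: "e = {x, y}" "y \<noteq> x"
    proof (cases "x = u")
      case True then show ?thesis using that uw by auto
    next
      case False then have "x = w" using uw e(3) by auto
      then show ?thesis using that uw by auto
    qed
    have yW': "y \<in> W'" using y e by (auto simp: W'_def)
    have "(x, y) \<in> R" unfolding R_def conn_rel_def using e y
      by (auto simp: induced_edges_def)
    then have Rxy: "R `` {x} = R `` {y}" using eqR by (simp add: equiv_class_eq)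
    have c2: "W // R \<subseteq> (\<lambda>c. R `` c) ` (W' // R')"
    proof
      fix X assume "X \<in> W // R"
      then have "X \<in> (\<lambda>c. R `` c) ` (W' // R') \<union> {R `` {x}}" using c1 by auto
      moreover have "R `` {x} \<in> (\<lambda>c. R `` c) ` (W' // R')"
      proof -
        have "R' `` {y} \<in> W' // R'" using yW' by (rule quotientI)
        then have "R `` (R' `` {y}) \<in> (\<lambda>c. R `` c) ` (W' // R')" by (rule imageI)
        moreover have "R `` {x} = R `` (R' `` {y})" using Rxy key[OF yW'] by (rule trans)
        ultimately show ?thesis by simp
      qed
      ultimately show "X \<in> (\<lambda>c. R `` c) ` (W' // R')" by auto
    qed
    have "card (W // R) \<le> card ((\<lambda>c. R `` c) ` (W' // R'))"
      by (rule card_mono) (use c2 fin' in auto)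
    also have "\<dots> \<le> card (W' // R')" using card_image_le[OF fin'] by simp
    finally show ?thesis using False
      by (simp add: num_components_def R_def R'_def W'_def)
  qed
qed

lemma cycle_rank_remove:
  assumes fin: "finite W" and xW: "x \<in> W"
    and E2: "\<forall>e\<in>E. card e = 2"
  shows "cycle_rank W (induced_edges E W)
     \<le> cycle_rank (W - {x}) (induced_edges E (W - {x}))
        + (if card {e \<in> induced_edges E W. x \<in> e} = 0 then 0
           else int (card {e \<in> induced_edges E W. x \<in> e}) - 1)"
proof -
  define D where "D = {e \<in> induced_edges E W. x \<in> e}"
  have finD: "finite D" using induced_edges_finite[OF fin] by (auto simp: D_def)
  have split: "induced_edges E W = induced_edges E (W - {x}) \<union> D"
    by (auto simp: induced_edges_def D_def)
  have disj: "induced_edges E (W - {x}) \<inter> D = {}"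
    by (auto simp: induced_edges_def D_def)
  have ce: "card (induced_edges E W) = card (induced_edges E (W - {x})) + card D"
    using split disj finD induced_edges_finite[of "W - {x}" E] fin
    by (simp add: card_Un_disjoint)
  have cW: "card W = card (W - {x}) + 1" using card.remove[OF fin xW] by simp
  note nc = num_components_remove[OF fin xW E2]
  have "D = {} \<longleftrightarrow> card D = 0" using finD by simp
  then show ?thesis using ce cW nc unfolding cycle_rank_def D_def[symmetric]
    by (auto split: if_splits)
qed


definition cv :: "nat \<Rightarrow> nat \<Rightarrow> (nat \<Rightarrow> nat) \<Rightarrow> nat \<Rightarrow> nat \<Rightarrow> nat" where
  "cv nb l p i j = p (nb + 1 + i * l + j)"

definition chainE :: "nat \<Rightarrow> nat \<Rightarrow> nat \<Rightarrow> (nat \<Rightarrow> nat) \<Rightarrow> (nat \<Rightarrow> nat) \<Rightarrow> (nat \<Rightarrow> nat) \<Rightarrow> nat set set" where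
  "chainE nb l m p a b =
     {{cv nb l p i j, cv nb l p i (Suc j)} | i j. i < m \<and> Suc j < l}
     \<union> {{a i, cv nb l p i 0} | i. i < m}
     \<union> {{cv nb l p i (l - 1), b i} | i. i < m}"

lemma pos_bound:
  fixes i j l m :: nat
  assumes "i < m" "j < l"
  shows "i * l + j < m * l"
proof -
  have "i * l + j < i * l + l" using assms by simp
  also have "\<dots> = Suc i * l" by simp
  also have "\<dots> \<le> m * l" using assms by (intro mult_right_mono) auto
  finally show ?thesis .
qed

lemma pos_inj:
  fixes i j i' j' l :: nat
  assumes "j < l" "j' < l" "i * l + j = i' * l + j'"
  shows "i = i' \<and> j = j'"
proof -
  have "i = (i * l + j) div l" using assms(1) by simp
  also have "\<dots> = (i' * l + j') div l" using assms(3) by simp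
  also have "\<dots> = i'" using assms(2) by simp
  finally have 1: "i = i'" .
  have "j = (i * l + j) mod l" using assms(1) by simp
  also have "\<dots> = (i' * l + j') mod l" using assms(3) by simp
  also have "\<dots> = j'" using assms(2) by simp
  finally show ?thesis using 1 by simp
qed

locale chains =
  fixes nb l m :: nat and p a b :: "nat \<Rightarrow> nat"
  assumes l2: "2 \<le> l"
    and perm: "p permutes {nb + 1..nb + m * l}"
    and aB: "\<And>i. i < m \<Longrightarrow> a i \<in> {1..nb}"
    and bB: "\<And>i. i < m \<Longrightarrow> b i \<in> {1..nb}"
begin

abbreviation v where "v \<equiv> cv nb l p"
abbreviation E where "E \<equiv> chainE nb l m p a b"

definition prv where "prv i j = (if j = 0 then a i else v i (j - 1))"
definition nxt where "nxt i j = (if j = l - 1 then b i else v i (Suc j))"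

lemma vR: "i < m \<Longrightarrow> j < l \<Longrightarrow> v i j \<in> {nb + 1..nb + m * l}"
  using pos_bound[of i m j l] permutes_in_image[OF perm]
  by (auto simp: cv_def)

lemma v_notB: "i < m \<Longrightarrow> j < l \<Longrightarrow> v i j \<notin> {1..nb}"
  using vR by fastforce

lemma v_inj:
  assumes "i < m" "j < l" "i' < m" "j' < l" "v i j = v i' j'"
  shows "i = i' \<and> j = j'"
proof -
  have "nb + 1 + i * l + j = nb + 1 + i' * l + j'"
    by (rule injD[OF permutes_inj[OF perm]]) (use assms(5) in \<open>simp add: cv_def\<close>)
  then show ?thesis using pos_inj[of j l j' i i'] assms by simp
qed

lemma v_inj_iff:
  "i < m \<Longrightarrow> j < l \<Longrightarrow> i' < m \<Longrightarrow> j' < l \<Longrightarrow> v i j = v i' j' \<longleftrightarrow> i = i' \<and> j = j'"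
  using v_inj by blast

lemma E_cases:
  assumes "e \<in> E"
  obtains (int) i j where "i < m" "Suc j < l" "e = {v i j, v i (Suc j)}"
    | (st) i where "i < m" "e = {a i, v i 0}"
    | (en) i where "i < m" "e = {v i (l - 1), b i}"
  using assms unfolding chainE_def by blast

lemma E2: "\<forall>e\<in>E. card e = 2"
proof
  fix e assume "e \<in> E"
  then show "card e = 2"
  proof (cases rule: E_cases)
    case (int i j) then show ?thesis using v_inj_iff[of i j i "Suc j"] by auto
  next
    case (st i) then show ?thesis using aB[of i] v_notB[of i 0] l2 by auto
  next
    case (en i) then show ?thesis using bB[of i] v_notB[of i "l - 1"] l2 by auto
  qed
qed

lemma E_sub: "E \<subseteq> edges_on {1..nb + m * l}"
proof
  fix e assume e: "e \<in> E"
  have "e \<subseteq> {1..nb + m * l}"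
    using e
  proof (cases rule: E_cases)
    case (int i j) then show ?thesis using vR[of i j] vR[of i "Suc j"] by auto
  next
    case (st i) then show ?thesis using aB[of i] vR[of i 0] l2 by auto
  next
    case (en i) then show ?thesis using bB[of i] vR[of i "l - 1"] l2 by auto
  qed
  then show "e \<in> edges_on {1..nb + m * l}" using E2 e by (auto simp: edges_on_def)
qed

lemma edge_has_v:
  assumes "e \<in> E" shows "\<exists>i<m. \<exists>j<l. v i j \<in> e"
  using assms
proof (cases rule: E_cases)
  case (int i j) then show ?thesis by auto
next
  case (st i)
  have "v i 0 \<in> e" "0 < l" using st l2 by auto
  then show ?thesis using st(1) by blast
next
  case (en i)
  have "v i (l - 1) \<in> e" "l - 1 < l" using en l2 by auto
  then show ?thesis using en(1) by blast
qed

lemma nbr: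
  assumes ij: "i < m" "j < l" and e: "e \<in> E" "v i j \<in> e"
  shows "e = {v i j, prv i j} \<or> e = {v i j, nxt i j}"
  using e(1)
proof (cases rule: E_cases)
  case (int i' j')
  then have "v i j = v i' j' \<or> v i j = v i' (Suc j')" using e by auto
  then show ?thesis
  proof
    assume "v i j = v i' j'"
    then have "i = i' \<and> j = j'" using v_inj[of i j i' j'] ij int by simp
    then show ?thesis using int by (auto simp: nxt_def)
  next
    assume "v i j = v i' (Suc j')"
    then have "i = i' \<and> j = Suc j'" using v_inj[of i j i' "Suc j'"] ij int by simp
    then show ?thesis using int by (auto simp: prv_def)
  qed
next
  case (st i')
  then have "v i j = v i' 0" using e aB[of i'] v_notB[OF ij] by auto
  then have "i = i' \<and> j = 0" using v_inj[of i j i' 0] ij st l2 by simp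
  then show ?thesis using st by (auto simp: prv_def)
next
  case (en i')
  then have "v i j = v i' (l - 1)" using e bB[of i'] v_notB[OF ij] by auto
  then have "i = i' \<and> j = l - 1" using v_inj[of i j i' "l - 1"] ij en l2 by simp
  then show ?thesis using en by (auto simp: nxt_def)
qed

definition full where "full W = {i. i < m \<and> (\<forall>j<l. v i j \<in> W)}"

lemma full_mono: "W' \<subseteq> W \<Longrightarrow> full W' \<subseteq> full W"
  by (auto simp: full_def)

lemma full_finite: "finite (full W)"
  by (rule finite_subset[of _ "{..<m}"]) (auto simp: full_def)

lemma full_card: assumes "finite W" shows "card (full W) * l \<le> card W"
proof -
  define S where "S i = v i ` {..<l}" for i
  have cardS: "card (S i) = l" if "i < m" for i
  proof -
    have "inj_on (v i) {..<l}" using v_inj[of i _ i] that by (auto simp: inj_on_def)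
    then show ?thesis by (simp add: S_def card_image)
  qed
  have disj: "S i \<inter> S i' = {}" if "i < m" "i' < m" "i \<noteq> i'" for i i'
    using v_inj that by (fastforce simp: S_def)
  have "card (\<Union>i\<in>full W. S i) = (\<Sum>i\<in>full W. card (S i))"
    by (rule card_UN_disjoint) (use full_finite disj in \<open>auto simp: S_def full_def\<close>)
  also have "\<dots> = (\<Sum>i\<in>full W. l)" using cardS by (auto simp: full_def)
  also have "\<dots> = card (full W) * l" by simp
  finally have eq: "card (\<Union>i\<in>full W. S i) = card (full W) * l" .
  have "(\<Union>i\<in>full W. S i) \<subseteq> W" by (auto simp: S_def full_def)
  then have "card (\<Union>i\<in>full W. S i) \<le> card W" using assms by (rule card_mono[rotated])
  then show ?thesis using eq by simp
qed

lemma two_of_two: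
  assumes "D \<subseteq> {A, B}" "2 \<le> card D"
  shows "A \<in> D \<and> B \<in> D"
proof (rule ccontr)
  assume "\<not> (A \<in> D \<and> B \<in> D)"
  then have "D \<subseteq> {A} \<or> D \<subseteq> {B}" using assms(1) by auto
  then have "card D \<le> 1"
  proof
    assume "D \<subseteq> {A}" then have "card D \<le> card {A}" by (rule card_mono[rotated]) auto
    then show ?thesis by simp
  next
    assume "D \<subseteq> {B}" then have "card D \<le> card {B}" by (rule card_mono[rotated]) auto
    then show ?thesis by simp
  qed
  then show False using assms(2) by simp
qed

lemma card_two_le: "D \<subseteq> {A, B} \<Longrightarrow> card D \<le> 2"
proof -
  assume "D \<subseteq> {A, B}"
  then have "card D \<le> card {A, B}" by (rule card_mono[rotated]) auto
  also have "\<dots> \<le> 2" by (cases "A = B") auto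
  finally show ?thesis .
qed

end


context chains begin

lemma main_bound:
  "finite W \<Longrightarrow> cycle_rank W (induced_edges E W) \<le> int (card (full W))"
proof (induction "card W" arbitrary: W rule: less_induct)
  case less
  define D where "D x = {e \<in> induced_edges E W. x \<in> e}" for x
  show ?case
  proof (cases "W = {}")
    case True
    then show ?thesis using cycle_rank_empty[OF E2] by simp
  next
    case False
    show ?thesis
    proof (cases "\<exists>x\<in>W. card (D x) \<le> 1")
      case True
      then obtain x where x: "x \<in> W" "card (D x) \<le> 1" by blast
      have "cycle_rank W (induced_edges E W) \<le> cycle_rank (W - {x}) (induced_edges E (W - {x}))"
        using cycle_rank_remove[OF less.prems x(1) E2] x(2) unfolding D_def
        by (auto split: if_splits)
      also have "\<dots> \<le> int (card (full (W - {x})))"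
        using less.hyps[OF card_Diff1_less[OF less.prems x(1)]] less.prems by simp
      also have "\<dots> \<le> int (card (full W))"
        using card_mono[OF full_finite full_mono[of "W - {x}" W]] by auto
      finally show ?thesis .
    next
      case False
      then have deg: "\<forall>x\<in>W. 2 \<le> card (D x)" by auto
      obtain x where x: "x \<in> W" using \<open>W \<noteq> {}\<close> by auto
      then have "D x \<noteq> {}" using deg by fastforce
      then obtain e where e: "e \<in> E" "e \<subseteq> W" "x \<in> e" by (auto simp: D_def induced_edges_def)
      obtain i j where ij: "i < m" "j < l" "v i j \<in> e" using edge_has_v[OF e(1)] by blast
      have yW: "v i j \<in> W" using ij e by auto
      have Dsub: "D (v i j') \<subseteq> {{v i j', prv i j'}, {v i j', nxt i j'}}" if "j' < l" for j'
        using nbr[OF ij(1) that] by (auto simp: D_def induced_edges_def)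
      have step: "prv i j' \<in> W \<and> nxt i j' \<in> W" if "j' < l" "v i j' \<in> W" for j'
      proof -
        have "{v i j', prv i j'} \<in> D (v i j') \<and> {v i j', nxt i j'} \<in> D (v i j')"
          using two_of_two[OF Dsub[OF that(1)]] deg that(2) by auto
        then show ?thesis by (auto simp: D_def induced_edges_def)
      qed
      have up: "v i (j + k) \<in> W" if "j + k < l" for k
        using that
      proof (induction k)
        case 0 then show ?case using yW by simp
      next
        case (Suc k)
        then have "v i (j + k) \<in> W" by simp
        then have "nxt i (j + k) \<in> W" using step[of "j + k"] Suc.prems by simp
        moreover have "j + k \<noteq> l - 1" using Suc.prems by simp
        ultimately show ?case by (simp add: nxt_def)
      qed
      have down: "v i (j - k) \<in> W" if "k \<le> j" for k
        using that
      proof (induction k)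
        case 0 then show ?case using yW by simp
      next
        case (Suc k)
        then have "v i (j - k) \<in> W" by simp
        then have "prv i (j - k) \<in> W" using step[of "j - k"] ij(2) by simp
        moreover have "j - k \<noteq> 0" using Suc.prems by simp
        moreover have "j - k - 1 = j - Suc k" by simp
        ultimately show ?case by (simp add: prv_def)
      qed
      have allW: "\<forall>j'<l. v i j' \<in> W"
      proof (intro allI impI)
        fix j' assume j': "j' < l"
        show "v i j' \<in> W"
        proof (cases "j \<le> j'")
          case True then show ?thesis using up[of "j' - j"] j' by simp
        next
          case False then show ?thesis using down[of "j - j'"] by simp
        qed
      qed
      have i_full: "i \<in> full W" using ij allW by (simp add: full_def)
      have i_not: "i \<notin> full (W - {v i j})" using ij by (auto simp: full_def)
      have psub: "full (W - {v i j}) \<subset> full W"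
        using full_mono[of "W - {v i j}" W] i_full i_not by blast
      have lt: "card (full (W - {v i j})) < card (full W)"
        by (rule psubset_card_mono[OF full_finite psub])
      have cD: "card (D (v i j)) \<le> 2" using card_two_le[OF Dsub[OF ij(2)]] .
      have "cycle_rank W (induced_edges E W)
          \<le> cycle_rank (W - {v i j}) (induced_edges E (W - {v i j})) + 1"
        using cycle_rank_remove[OF less.prems yW E2] cD unfolding D_def
        by (auto split: if_splits)
      also have "\<dots> \<le> int (card (full (W - {v i j}))) + 1"
        using less.hyps[OF card_Diff1_less[OF less.prems yW]] less.prems by simp
      also have "\<dots> \<le> int (card (full W))" using lt by simp
      finally show ?thesis .
    qed
  qed
qed

lemma in_hered:
  fixes M :: real
  assumes n: "n = nb + m * l"
    and gN: "\<And>k. N \<le> k \<Longrightarrow> M * real k / ln (real k) \<le> real (g k)"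
    and Mpos: "0 < M" and Nl: "N \<le> l" and lnl: "ln (real n) \<le> M * real l"
  shows "E \<in> hered_Fg g n"
proof -
  have G: "E \<in> graphs_on {1..n}" using E_sub n by (simp add: graphs_on_def)
  have "cycle_rank W (induced_edges E W) \<le> int (g (card W))"
    if W: "W \<subseteq> {1..n}" "W \<noteq> {}" for W
  proof -
    have finW: "finite W" using W finite_subset by blast
    have r: "cycle_rank W (induced_edges E W) \<le> int (card (full W))"
      by (rule main_bound[OF finW])
    show ?thesis
    proof (cases "card (full W) = 0")
      case True then show ?thesis using r by simp
    next
      case False
      define k where "k = card W"
      have fk: "card (full W) * l \<le> k" using full_card[OF finW] by (simp add: k_def)
      have c1: "1 \<le> card (full W)" using False by simp
      have "1 * l \<le> card (full W) * l" by (rule mult_le_mono1[OF c1])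
      then have "l \<le> card (full W) * l" by (simp only: mult_1)
      then have lk: "l \<le> k" using fk by (rule le_trans)
      have kn: "k \<le> n" unfolding k_def using card_mono[OF _ W(1)] by simp
      have l2': "2 \<le> l" using l2 .
      have kpos: "2 \<le> k" using lk l2 by simp
      have lnk: "0 < ln (real k)" using kpos by simp
      have "ln (real k) \<le> ln (real n)" using kn kpos by simp
      also have "\<dots> \<le> M * real l" by (rule lnl)
      finally have lnkM: "ln (real k) \<le> M * real l" .
      have "real (card (full W) * l) \<le> real k" using fk by (simp only: of_nat_le_iff)
      then have "real (card (full W)) * real l \<le> real k" by simp
      then have c1: "real (card (full W)) \<le> real k / real l"
        using l2 by (simp add: field_simps)
      have lpos: "0 < real l" using l2 by simp
      have "real k * ln (real k) \<le> real k * (M * real l)"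
        using mult_left_mono[OF lnkM, of "real k"] by simp
      then have "real k / real l \<le> M * real k / ln (real k)"
        using lpos lnk by (simp add: le_divide_eq divide_le_eq algebra_simps)
      also have "\<dots> \<le> real (g k)" using gN Nl lk by simp
      finally have "real (card (full W)) \<le> real (g k)" using c1 by linarith
      then have "card (full W) \<le> g k" by simp
      then show ?thesis using r k_def by simp
    qed
  qed
  then show ?thesis using G by (simp add: hered_Fg_def)
qed

end


lemma doubleton_same: "{x, y} = {x, z} \<Longrightarrow> y = z"
  by (metis doubleton_eq_iff)

lemma chainE_int: "i < m \<Longrightarrow> Suc j < l \<Longrightarrow> {cv nb l p i j, cv nb l p i (Suc j)} \<in> chainE nb l m p a b"
  unfolding chainE_def by blast
lemma chainE_st: "i < m \<Longrightarrow> {a i, cv nb l p i 0} \<in> chainE nb l m p a b"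
  unfolding chainE_def by blast
lemma chainE_en: "i < m \<Longrightarrow> {cv nb l p i (l - 1), b i} \<in> chainE nb l m p a b"
  unfolding chainE_def by blast

lemma chain_inj:
  assumes c1: "chains nb l m p a b" and c2: "chains nb l m p' a' b'"
    and EE: "chainE nb l m p a b = chainE nb l m p' a' b'"
    and st: "\<And>i. i < m \<Longrightarrow> cv nb l p i 0 = cv nb l p' i 0"
    and i: "i < m"
  shows "(\<forall>j<l. cv nb l p i j = cv nb l p' i j) \<and> a i = a' i \<and> b i = b' i"
proof -
  interpret A: chains nb l m p a b by (rule c1)
  interpret B: chains nb l m p' a' b' by (rule c2)
  have l2: "2 \<le> l" by (rule A.l2)
  have vv: "\<forall>j'\<le>j. j' < l \<longrightarrow> cv nb l p i j' = cv nb l p' i j'" for j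
  proof (induction j)
    case 0 then show ?case using st[OF i] by simp
  next
    case (Suc j)
    show ?case
    proof (intro allI impI)
      fix j' assume j': "j' \<le> Suc j" "j' < l"
      show "cv nb l p i j' = cv nb l p' i j'"
      proof (cases "j' \<le> j")
        case True then show ?thesis using Suc.IH j' by simp
      next
        case False
        then have jj: "j' = Suc j" using j' by simp
        have jl: "Suc j < l" using j' jj by simp
        have eqj: "cv nb l p i j = cv nb l p' i j" using Suc.IH jl by simp
        have "{cv nb l p i j, cv nb l p i (Suc j)} \<in> chainE nb l m p a b"
          by (rule chainE_int[OF i jl])
        then have e: "{cv nb l p i j, cv nb l p i (Suc j)} \<in> chainE nb l m p' a' b'" using EE by simp
        have inn: "cv nb l p' i j \<in> {cv nb l p i j, cv nb l p i (Suc j)}" using eqj by simp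
        from B.nbr[OF i _ e inn] jl
        have "{cv nb l p i j, cv nb l p i (Suc j)} = {cv nb l p' i j, B.prv i j}
             \<or> {cv nb l p i j, cv nb l p i (Suc j)} = {cv nb l p' i j, B.nxt i j}" by simp
        then show ?thesis
        proof
          assume h: "{cv nb l p i j, cv nb l p i (Suc j)} = {cv nb l p' i j, B.prv i j}"
          then have "{cv nb l p i j, cv nb l p i (Suc j)} = {cv nb l p i j, B.prv i j}" using eqj by simp
          then have h2: "cv nb l p i (Suc j) = B.prv i j" by (rule doubleton_same)
          show ?thesis
          proof (cases "j = 0")
            case True
            then have "cv nb l p i (Suc j) = a' i" using h2 by (simp add: B.prv_def)
            then show ?thesis using B.aB[OF i] A.v_notB[OF i jl] by simp
          next
            case False
            then have "cv nb l p i (Suc j) = cv nb l p' i (j - 1)" using h2 by (simp add: B.prv_def)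
            also have "\<dots> = cv nb l p i (j - 1)" using Suc.IH jl by simp
            finally have calc: "cv nb l p i (Suc j) = cv nb l p i (j - 1)" .
            have "j - 1 < l" using jl by simp
            from A.v_inj[OF i jl i this calc] have "Suc j = j - 1" by simp
            then show ?thesis by simp
          qed
        next
          assume h: "{cv nb l p i j, cv nb l p i (Suc j)} = {cv nb l p' i j, B.nxt i j}"
          then have "{cv nb l p i j, cv nb l p i (Suc j)} = {cv nb l p i j, B.nxt i j}" using eqj by simp
          then have h2: "cv nb l p i (Suc j) = B.nxt i j" by (rule doubleton_same)
          have "j \<noteq> l - 1" using jl by simp
          then show ?thesis using h2 jj by (simp add: B.nxt_def)
        qed
      qed
    qed
  qed
  have allv: "\<forall>j<l. cv nb l p i j = cv nb l p' i j" using vv by blast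
  have aa: "a i = a' i"
  proof -
    have "{a i, cv nb l p i 0} \<in> chainE nb l m p a b" by (rule chainE_st[OF i])
    then have e: "{a i, cv nb l p i 0} \<in> chainE nb l m p' a' b'" using EE by simp
    have l0: "0 < l" using l2 by simp
    have eq0: "cv nb l p i 0 = cv nb l p' i 0" using st[OF i] .
    have inn: "cv nb l p' i 0 \<in> {a i, cv nb l p i 0}" using eq0 by simp
    from B.nbr[OF i l0 e inn]
    have "{a i, cv nb l p i 0} = {cv nb l p' i 0, B.prv i 0}
       \<or> {a i, cv nb l p i 0} = {cv nb l p' i 0, B.nxt i 0}" .
    then show ?thesis
    proof
      assume "{a i, cv nb l p i 0} = {cv nb l p' i 0, B.prv i 0}"
      then have "{cv nb l p i 0, a i} = {cv nb l p i 0, a' i}" using eq0 by (simp add: B.prv_def insert_commute)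
      then show ?thesis by (rule doubleton_same)
    next
      assume "{a i, cv nb l p i 0} = {cv nb l p' i 0, B.nxt i 0}"
      then have "{cv nb l p i 0, a i} = {cv nb l p i 0, cv nb l p' i 1}" using eq0 l2
        by (simp add: B.nxt_def insert_commute)
      then have "a i = cv nb l p' i 1" by (rule doubleton_same)
      moreover have "1 < l" using l2 by simp
      ultimately show ?thesis using B.v_notB[OF i] A.aB[OF i] by auto
    qed
  qed
  have bb: "b i = b' i"
  proof -
    have "{cv nb l p i (l - 1), b i} \<in> chainE nb l m p a b" by (rule chainE_en[OF i])
    then have e: "{cv nb l p i (l - 1), b i} \<in> chainE nb l m p' a' b'" using EE by simp
    have l0: "l - 1 < l" using l2 by simp
    have eq0: "cv nb l p i (l - 1) = cv nb l p' i (l - 1)" using allv l0 by simp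
    have inn: "cv nb l p' i (l - 1) \<in> {cv nb l p i (l - 1), b i}" using eq0 by simp
    from B.nbr[OF i l0 e inn]
    have "{cv nb l p i (l - 1), b i} = {cv nb l p' i (l - 1), B.prv i (l - 1)}
       \<or> {cv nb l p i (l - 1), b i} = {cv nb l p' i (l - 1), B.nxt i (l - 1)}" .
    then show ?thesis
    proof
      assume "{cv nb l p i (l - 1), b i} = {cv nb l p' i (l - 1), B.prv i (l - 1)}"
      then have "{cv nb l p i (l - 1), b i} = {cv nb l p i (l - 1), cv nb l p' i (l - 1 - 1)}"
        using eq0 l2 by (simp add: B.prv_def)
      then have "b i = cv nb l p' i (l - 1 - 1)" by (rule doubleton_same)
      moreover have "l - 1 - 1 < l" using l2 by simp
      ultimately show ?thesis using B.v_notB[OF i] A.bB[OF i] by auto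
    next
      assume "{cv nb l p i (l - 1), b i} = {cv nb l p' i (l - 1), B.nxt i (l - 1)}"
      then have "{cv nb l p i (l - 1), b i} = {cv nb l p i (l - 1), b' i}" using eq0
        by (simp add: B.nxt_def)
      then show ?thesis by (rule doubleton_same)
    qed
  qed
  show ?thesis using allv aa bb by simp
qed


lemma hered_finite: "finite (hered_Fg g n)"
proof (rule finite_subset)
  show "hered_Fg g n \<subseteq> Pow (edges_on {1..n})" by (auto simp: hered_Fg_def graphs_on_def)
  have "edges_on {1..n} \<subseteq> Pow {1..n}" by (auto simp: edges_on_def)
  then show "finite (Pow (edges_on {1..n}))" by (meson finite_Pow_iff finite_atLeastAtMost finite_subset)
qed

lemma count_lower:
  fixes M :: real
  assumes l2: "2 \<le> l" and n: "n = nb + m * l"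
    and gN: "\<And>k. N \<le> k \<Longrightarrow> M * real k / ln (real k) \<le> real (g k)"
    and Mpos: "0 < M" and Nl: "N \<le> l" and lnl: "ln (real n) \<le> M * real l"
  shows "fact (m * l) * nb ^ m * nb ^ m \<le> card (hered_Fg g n) * (m * l) ^ m"
proof -
  define R where "R = {nb + 1..nb + m * l}"
  define Bs where "Bs = {1..nb}"
  define Codes where "Codes = {p. p permutes R} \<times> ((\<Pi>\<^sub>E i\<in>{..<m}. Bs) \<times> (\<Pi>\<^sub>E i\<in>{..<m}. Bs))"
  define Psi where "Psi = (\<lambda>(p, a, b). (chainE nb l m p a b, restrict (\<lambda>i. cv nb l p i 0) {..<m}))"
  have ch: "chains nb l m p a b" if "(p, a, b) \<in> Codes" for p a b
  proof -
    have p: "p permutes R" and a: "a \<in> (\<Pi>\<^sub>E i\<in>{..<m}. Bs)" and b: "b \<in> (\<Pi>\<^sub>E i\<in>{..<m}. Bs)"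
      using that unfolding Codes_def by auto
    show ?thesis
    proof
      show "2 \<le> l" by (rule l2)
      show "p permutes {nb + 1..nb + m * l}" using p unfolding R_def .
      show "a i \<in> {1..nb}" if "i < m" for i using PiE_mem[OF a, of i] that unfolding Bs_def by simp
      show "b i \<in> {1..nb}" if "i < m" for i using PiE_mem[OF b, of i] that unfolding Bs_def by simp
    qed
  qed
  have inj: "inj_on Psi Codes"
  proof (rule inj_onI)
    fix x y assume x: "x \<in> Codes" and y: "y \<in> Codes" and eq: "Psi x = Psi y"
    obtain p a b where xx: "x = (p, a, b)" by (cases x) auto
    obtain p' a' b' where yy: "y = (p', a', b')" by (cases y) auto
    have c1: "chains nb l m p a b" using ch x xx by simp
    have c2: "chains nb l m p' a' b'" using ch y yy by simp
    have EE: "chainE nb l m p a b = chainE nb l m p' a' b'" using eq xx yy by (simp add: Psi_def)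
    have rr: "restrict (\<lambda>i. cv nb l p i 0) {..<m} = restrict (\<lambda>i. cv nb l p' i 0) {..<m}"
      using eq xx yy by (simp add: Psi_def)
    have st: "cv nb l p i 0 = cv nb l p' i 0" if "i < m" for i
      using fun_cong[OF rr, of i] that by simp
    have ci: "(\<forall>j<l. cv nb l p i j = cv nb l p' i j) \<and> a i = a' i \<and> b i = b' i" if "i < m" for i
      by (rule chain_inj[OF c1 c2 EE _ that]) (simp add: st)
    have pp: "p = p'"
    proof
      fix z show "p z = p' z"
      proof (cases "z \<in> R")
        case True
        define i where "i = (z - (nb + 1)) div l"
        define j where "j = (z - (nb + 1)) mod l"
        have lpos: "0 < l" using l2 by simp
        have t: "(z - (nb + 1)) div l * l + (z - (nb + 1)) mod l = z - (nb + 1)"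
          by (rule div_mult_mod_eq)
        have "nb + 1 \<le> z" using True by (simp add: R_def)
        then have zz: "z = nb + 1 + i * l + j" using t unfolding i_def j_def by linarith
        have jl: "j < l" using lpos by (simp add: j_def)
        have "z - (nb + 1) < m * l" using True l2 by (auto simp: R_def)
        then have im: "i < m" unfolding i_def by (simp add: less_mult_imp_div_less)
        have "p z = cv nb l p i j" using zz by (simp add: cv_def)
        also have "\<dots> = cv nb l p' i j" using ci[OF im] jl by simp
        also have "\<dots> = p' z" using zz by (simp add: cv_def)
        finally show ?thesis .
      next
        case False
        have "p permutes R" "p' permutes R" using x y xx yy by (auto simp: Codes_def)
        then show ?thesis using False by (simp add: permutes_not_in)
      qed
    qed
    have aa: "a = a'"
    proof (rule PiE_ext)
      show "a \<in> (\<Pi>\<^sub>E i\<in>{..<m}. Bs)" using x xx by (simp add: Codes_def)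
      show "a' \<in> (\<Pi>\<^sub>E i\<in>{..<m}. Bs)" using y yy by (simp add: Codes_def)
      fix i assume "i \<in> {..<m}"
      then have "i < m" by simp
      then show "a i = a' i" using ci by blast
    qed
    have bb: "b = b'"
    proof (rule PiE_ext)
      show "b \<in> (\<Pi>\<^sub>E i\<in>{..<m}. Bs)" using x xx by (simp add: Codes_def)
      show "b' \<in> (\<Pi>\<^sub>E i\<in>{..<m}. Bs)" using y yy by (simp add: Codes_def)
      fix i assume "i \<in> {..<m}"
      then have "i < m" by simp
      then show "b i = b' i" using ci by blast
    qed
    show "x = y" using xx yy pp aa bb by simp
  qed
  have img: "Psi ` Codes \<subseteq> hered_Fg g n \<times> (\<Pi>\<^sub>E i\<in>{..<m}. R)"
  proof
    fix y assume "y \<in> Psi ` Codes"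
    then obtain p a b where x: "(p, a, b) \<in> Codes" and yy: "y = Psi (p, a, b)" by auto
    interpret C: chains nb l m p a b by (rule ch[OF x])
    have "chainE nb l m p a b \<in> hered_Fg g n"
      by (rule C.in_hered[OF n gN Mpos Nl lnl])
    moreover have "restrict (\<lambda>i. cv nb l p i 0) {..<m} \<in> (\<Pi>\<^sub>E i\<in>{..<m}. R)"
      using C.vR l2 by (auto simp: R_def)
    ultimately show "y \<in> hered_Fg g n \<times> (\<Pi>\<^sub>E i\<in>{..<m}. R)" using yy by (simp add: Psi_def)
  qed
  have finT: "finite (hered_Fg g n \<times> (\<Pi>\<^sub>E i\<in>{..<m}. R))"
    using hered_finite by (simp add: R_def finite_PiE)
  have "card Codes \<le> card (hered_Fg g n \<times> (\<Pi>\<^sub>E i\<in>{..<m}. R))"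
    by (rule card_inj_on_le[OF inj img finT])
  moreover have "card Codes = fact (m * l) * nb ^ m * nb ^ m"
  proof -
    have "card {p. p permutes R} = fact (m * l)"
      by (rule card_permutations) (auto simp: R_def)
    moreover have "card (\<Pi>\<^sub>E i\<in>{..<m}. Bs) = nb ^ m" by (simp add: card_PiE Bs_def)
    ultimately show ?thesis by (simp add: Codes_def card_cartesian_product)
  qed
  moreover have "card (hered_Fg g n \<times> (\<Pi>\<^sub>E i\<in>{..<m}. R)) = card (hered_Fg g n) * (m * l) ^ m"
    by (simp add: card_cartesian_product card_PiE R_def)
  ultimately show ?thesis by simp
qed


lemma fact_add_le: "fact (a + b) \<le> (fact a :: nat) * (a + b) ^ b"
proof (induction b)
  case 0 then show ?case by simp
next
  case (Suc b)
  have "fact (a + Suc b) = (a + Suc b) * (fact (a + b) :: nat)" by simp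
  also have "\<dots> \<le> (a + Suc b) * (fact a * (a + b) ^ b)" by (rule mult_left_mono[OF Suc.IH]) simp
  also have "\<dots> \<le> (a + Suc b) * (fact a * (a + Suc b) ^ b)"
    by (intro mult_left_mono power_mono) auto
  also have "\<dots> = fact a * (a + Suc b) ^ Suc b" by (simp add: algebra_simps)
  finally show ?case .
qed

lemma g_bound:
  assumes "(\<lambda>n. real n / ln (real n)) \<in> o(\<lambda>n. real (g n))" and M: "M > 0"
  shows "\<exists>N. \<forall>k\<ge>N. M * real k / ln (real k) \<le> real (g k)"
proof -
  have "eventually (\<lambda>n. norm (real n / ln (real n)) \<le> (1 / M) * norm (real (g n))) sequentially"
    using landau_o.smallD[OF assms(1), of "1 / M"] M by simp
  then obtain N where N: "\<And>k. k \<ge> N \<Longrightarrow> norm (real k / ln (real k)) \<le> (1 / M) * norm (real (g k))"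
    by (auto simp: eventually_sequentially)
  have "M * real k / ln (real k) \<le> real (g k)" if "k \<ge> N" for k
  proof -
    have ab: "real k / ln (real k) \<le> norm (real k / ln (real k))"
    proof (cases "k = 0")
      case False
      then have "0 \<le> ln (real k)" by simp
      then show ?thesis by simp
    qed simp
    have "real k / ln (real k) \<le> real (g k) / M" using ab N[OF that] by simp
    then have "M * (real k / ln (real k)) \<le> real (g k)" using M by (simp add: field_simps)
    then show ?thesis by simp
  qed
  then show ?thesis by blast
qed

lemma asy1:
  fixes M :: real assumes "M \<ge> 1"
  shows "filterlim (\<lambda>x::real. ((x - x / (ln x)^2 - 1) / (ln x / M + 3) - 1) * (ln x - 4 * ln (ln x))
     - x * (M - 1) - (x / (ln x)^2 + ln x / M + 4) * ln x) at_top at_top"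
  using assms by real_asymp

lemma asy2: "filterlim (\<lambda>x::real. ln x - 4 * ln (ln x)) at_top at_top"
  by real_asymp
lemma asy3: "filterlim (\<lambda>x::real. x - x / (ln x)^2 - 1) at_top at_top"
  by real_asymp
lemma asy4: "filterlim (\<lambda>x::real. ln x) at_top at_top"
  by real_asymp

lemma seq_of_real:
  fixes f :: "real \<Rightarrow> real"
  assumes "filterlim f at_top (at_top :: real filter)"
  shows "eventually (\<lambda>n::nat. Z \<le> f (real n)) sequentially"
proof -
  have "filterlim (\<lambda>n::nat. f (real n)) at_top sequentially"
    by (rule filterlim_compose[OF assms filterlim_real_sequentially])
  from eventually_compose_filterlim[OF eventually_ge_at_top[of Z] this] show ?thesis .
qed


lemma key:
  assumes asm: "(\<lambda>n. real n / ln (real n)) \<in> o(\<lambda>n. real (g n))" and C: "C \<ge> 1"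
  shows "eventually (\<lambda>n. C ^ n * fact n \<le> real (card (hered_Fg g n))) sequentially"
proof -
  define c where "c = ln C"
  have c0: "c \<ge> 0" using C by (simp add: c_def)
  define M where "M = c + 1"
  have M1: "M \<ge> 1" and M0: "M > 0" using c0 by (auto simp: M_def)
  have Mc: "M - 1 = c" by (simp add: M_def)
  obtain N where N: "\<forall>k\<ge>N. M * real k / ln (real k) \<le> real (g k)"
    using g_bound[OF asm M0] by blast
  note ev1 = seq_of_real[OF asy1[OF M1], of 0]
  note ev2 = seq_of_real[OF asy2, of 0]
  note ev3 = seq_of_real[OF asy3, of 0]
  note ev4 = seq_of_real[OF asy4, of "M * (real N + 1)"]
  show ?thesis using ev1 ev2 ev3 ev4
  proof eventually_elim
    case (elim n)
    define x where "x = real n"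
    define L where "L = ln x"
    have F: "0 \<le> ((x - x / L^2 - 1) / (L / M + 3) - 1) * (L - 4 * ln L) - x * c - (x / L^2 + L / M + 4) * L"
      using elim(1) Mc by (simp add: x_def L_def)
    have Q0: "0 \<le> L - 4 * ln L" using elim(2) by (simp add: x_def L_def)
    have A0: "0 \<le> x - x / L^2 - 1" using elim(3) by (simp add: x_def L_def)
    have LN: "M * (real N + 1) \<le> L" using elim(4) by (simp add: x_def L_def)
    have "M * 1 \<le> M * (real N + 1)" using M0 by (intro mult_left_mono) auto
    then have L1: "1 \<le> L" using LN M1 by linarith
    have n0: "n \<noteq> 0"
    proof
      assume "n = 0" then have "L = 0" by (simp add: L_def x_def)
      then show False using L1 by simp
    qed
    have x0: "0 < x" using n0 by (simp add: x_def)
    have L0: "0 < L" using L1 by simp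
    have lnL0: "0 \<le> ln L" using L1 by simp
    define l where "l = nat \<lceil>L / M\<rceil> + 2"
    define b0 where "b0 = nat \<lceil>x / L^2\<rceil>"
    define m where "m = (n - b0) div l"
    define nb where "nb = n - m * l"
    have LM0: "0 \<le> L / M" using L0 M0 by simp
    have rl: "real l = of_int \<lceil>L / M\<rceil> + 2" using LM0 by (simp add: l_def)
    have hl1: "L / M + 2 \<le> real l" using rl by (simp add: le_of_int_ceiling)
    have hl2: "real l \<le> L / M + 3" using rl ceiling_correct[of "L / M"] by linarith
    have xL0: "0 < x / L^2" using x0 L0 by simp
    have rb: "real b0 = of_int \<lceil>x / L^2\<rceil>" using xL0 by (simp add: b0_def)
    have hb1: "x / L^2 \<le> real b0" using rb by (simp add: le_of_int_ceiling)
    have hb2: "real b0 \<le> x / L^2 + 1" using rb ceiling_correct[of "x / L^2"] by linarith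
    have b0n: "b0 \<le> n" using hb2 A0 by (simp add: x_def)
    have b0pos: "1 \<le> b0" using hb1 xL0 by linarith
    have l2: "2 \<le> l" by (simp add: l_def)
    have dm: "(n - b0) div l * l + (n - b0) mod l = n - b0" by (rule div_mult_mod_eq)
    have ml: "(n - b0) mod l < l" using l2 by simp
    have hmul: "m * l \<le> n - b0" using dm unfolding m_def by linarith
    have hmul2: "n - b0 < m * l + l" using dm ml unfolding m_def by linarith
    have n_eq: "n = nb + m * l" using hmul b0n by (simp add: nb_def)
    have nb_ge: "b0 \<le> nb" using hmul b0n by (simp add: nb_def)
    have aux: "\<And>t::nat. n - b0 < t + l \<Longrightarrow> b0 \<le> n \<Longrightarrow> n - t < b0 + l" using b0pos by arith
    have nb_lt: "nb < b0 + l" unfolding nb_def by (rule aux[OF hmul2 b0n])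
    have Nl: "N \<le> l"
    proof -
      have "real N + 1 \<le> L / M" using LN M0 by (simp add: le_divide_eq mult.commute)
      then have "real N \<le> real l" using hl1 by linarith
      then show ?thesis by simp
    qed
    have lnl: "ln (real n) \<le> M * real l"
    proof -
      have "L / M \<le> real l" using hl1 by linarith
      then have "L \<le> M * real l" using M0 by (simp add: divide_le_eq mult.commute)
      then show ?thesis by (simp add: L_def x_def)
    qed
    have gN: "\<And>k. N \<le> k \<Longrightarrow> M * real k / ln (real k) \<le> real (g k)" using N by blast
    have count: "fact (m * l) * nb ^ m * nb ^ m \<le> card (hered_Fg g n) * (m * l) ^ m"
      by (rule count_lower[OF l2 n_eq gN M0 Nl lnl])
    define rm where "rm = real m"
    define rnb where "rnb = real nb"
    define Q where "Q = L - 4 * ln L"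
    define A where "A = x - x / L^2 - 1"
    define D where "D = A / (L / M + 3) - 1"
    have rm0: "0 \<le> rm" by (simp add: rm_def)
    have hD: "D \<le> rm"
    proof -
      have "real (n - b0) < rm * real l + real l" using hmul2 unfolding rm_def
        by (metis of_nat_add of_nat_less_iff of_nat_mult)
      moreover have "real (n - b0) = x - real b0" using b0n by (simp add: x_def)
      ultimately have "A \<le> (rm + 1) * real l" using hb2 unfolding A_def by (simp add: algebra_simps)
      moreover have lpos: "0 < real l" using l2 by simp
      ultimately have "A / real l \<le> rm + 1" by (simp add: divide_le_eq)
      moreover have "A / (L / M + 3) \<le> A / real l"
        using A0 hl2 lpos unfolding A_def by (intro divide_left_mono) auto
      ultimately show ?thesis unfolding D_def by linarith
    qed
    have hlnb: "L - 2 * ln L \<le> ln rnb"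
    proof -
      have "x / L^2 \<le> rnb" using hb1 nb_ge unfolding rnb_def by linarith
      then have "ln (x / L^2) \<le> ln rnb" using xL0 by simp
      moreover have "ln (x / L^2) = L - 2 * ln L"
        using x0 L0 by (simp add: ln_divide_pos ln_realpow L_def)
      ultimately show ?thesis by simp
    qed
    have rnb_pos: "0 < rnb" using nb_ge b0pos unfolding rnb_def by simp
    have hnbU: "rnb \<le> x / L^2 + L / M + 4"
    proof -
      have "real nb < real b0 + real l" using nb_lt by (metis of_nat_add of_nat_less_iff)
      then show ?thesis using hb2 hl2 unfolding rnb_def by linarith
    qed
    have P1: "rm * (L - 2 * ln L) \<le> rm * ln rnb" using hlnb rm0 by (rule mult_left_mono)
    have P2: "D * Q \<le> rm * Q" using hD Q0 unfolding Q_def by (rule mult_right_mono)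
    have P3: "rnb * L \<le> (x / L^2 + L / M + 4) * L" using hnbU L0 by (simp add: mult_right_mono)
    have F': "x * c + (x / L^2 + L / M + 4) * L \<le> D * Q" using F unfolding D_def Q_def A_def by linarith
    have main: "x * c + (rnb + rm) * L \<le> 2 * rm * ln rnb"
    proof -
      have e1: "rm * (L - 2 * ln L) = rm * L - 2 * (rm * ln L)" by (simp add: algebra_simps)
      have e2: "rm * Q = rm * L - 4 * (rm * ln L)" by (simp add: Q_def algebra_simps)
      have e3: "(rnb + rm) * L = rnb * L + rm * L" by (simp add: algebra_simps)
      have "rm * Q \<le> 2 * (rm * ln rnb) - rm * L" using P1 e1 e2 by linarith
      then show ?thesis using P2 P3 F' e3 by linarith
    qed
    have C0: "0 < C" using C by simp
    have lnL: "ln (C ^ n * x ^ (nb + m)) = x * c + (rnb + rm) * L"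
      using C0 x0 by (simp add: ln_mult_pos ln_realpow c_def L_def x_def rnb_def rm_def algebra_simps)
    have lnR: "ln (rnb ^ (2 * m)) = 2 * rm * ln rnb"
      using rnb_pos by (simp add: ln_realpow rm_def)
    have expo: "C ^ n * x ^ (nb + m) \<le> rnb ^ (2 * m)"
    proof -
      have "ln (C ^ n * x ^ (nb + m)) \<le> ln (rnb ^ (2 * m))" using lnL lnR main by simp
      moreover have "0 < C ^ n * x ^ (nb + m)" using C0 x0 by simp
      moreover have "0 < rnb ^ (2 * m)" using rnb_pos by simp
      ultimately show ?thesis by simp
    qed
    define P where "P = real ((m * l) ^ m)"
    have P0: "0 < P"
    proof (cases "m = 0")
      case True then show ?thesis by (simp add: P_def)
    next
      case False then show ?thesis using l2 by (simp add: P_def)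
    qed
    have Px: "P \<le> x ^ m"
    proof -
      have "real (m * l) \<le> x" using n_eq by (simp add: x_def)
      then have "real (m * l) ^ m \<le> x ^ m" by (rule power_mono) simp
      then show ?thesis by (simp add: P_def)
    qed
    have cnt: "fact (m * l) * rnb ^ (2 * m) \<le> real (card (hered_Fg g n)) * P"
    proof -
      have "real (fact (m * l) * nb ^ m * nb ^ m) \<le> real (card (hered_Fg g n) * (m * l) ^ m)"
        using count by (simp only: of_nat_le_iff)
      moreover have "rnb ^ (2 * m) = rnb ^ m * rnb ^ m" by (simp add: mult_2 power_add)
      ultimately show ?thesis by (simp add: P_def rnb_def of_nat_mult)
    qed
    have fct: "(fact n :: real) \<le> fact (m * l) * x ^ nb"
    proof -
      have "fact (m * l + nb) \<le> (fact (m * l) :: nat) * (m * l + nb) ^ nb" by (rule fact_add_le)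
      then have "fact n \<le> (fact (m * l) :: nat) * n ^ nb" using n_eq by (simp add: add.commute)
      then have "real (fact n) \<le> real (fact (m * l) * n ^ nb)" by (simp only: of_nat_le_iff)
      then show ?thesis by (simp add: x_def of_nat_fact)
    qed
    have "C ^ n * fact n * P \<le> C ^ n * (fact (m * l) * x ^ nb) * x ^ m"
    proof (rule mult_mono)
      show "C ^ n * fact n \<le> C ^ n * (fact (m * l) * x ^ nb)" using fct C0 by (simp add: mult_left_mono)
    qed (use Px C0 x0 P0 in auto)
    also have "\<dots> = fact (m * l) * (C ^ n * x ^ (nb + m))" by (simp add: power_add algebra_simps)
    also have "\<dots> \<le> fact (m * l) * rnb ^ (2 * m)" using expo by (simp add: mult_left_mono)
    also have "\<dots> \<le> real (card (hered_Fg g n)) * P" by (rule cnt)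
    finally have "C ^ n * fact n * P \<le> real (card (hered_Fg g n)) * P" .
    then show "C ^ n * fact n \<le> real (card (hered_Fg g n))" using P0 by simp
  qed
qed


theorem theorem5:
  fixes g :: "nat \<Rightarrow> nat"
  assumes "(\<lambda>n. real n / ln (real n)) \<in> o(\<lambda>n. real (g n))"
  shows "filterlim (\<lambda>n. root n (real (card (hered_Fg g n)) / fact n)) at_top sequentially"
  unfolding filterlim_at_top
proof
  fix Z :: real
  define C where "C = max Z 1"
  have C1: "C \<ge> 1" by (simp add: C_def)
  have "eventually (\<lambda>n. C ^ n * fact n \<le> real (card (hered_Fg g n)) \<and> 1 \<le> n) sequentially"
    using key[OF assms C1] eventually_ge_at_top[of "1::nat"] by (rule eventually_conj)
  then show "eventually (\<lambda>n. Z \<le> root n (real (card (hered_Fg g n)) / fact n)) sequentially"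
  proof (rule eventually_mono)
    fix n :: nat
    assume h: "C ^ n * fact n \<le> real (card (hered_Fg g n)) \<and> 1 \<le> n"
    have fpos: "(0::real) < fact n" by simp
    have "C ^ n \<le> real (card (hered_Fg g n)) / fact n" using h fpos by (simp add: le_divide_eq)
    moreover have n0: "0 < n" using h by simp
    ultimately have "root n (C ^ n) \<le> root n (real (card (hered_Fg g n)) / fact n)"
      by (simp add: real_root_le_mono)
    moreover have "root n (C ^ n) = C" using n0 C1 by (simp add: real_root_power_cancel)
    ultimately show "Z \<le> root n (real (card (hered_Fg g n)) / fact n)" by (simp add: C_def)
  qed
qed

end
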